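(* Let $K$, $\mu_0$, $\omega$, $f^{\mathrm{que}}$ and $S^{\mathrm{que}}$ be as in the context. For $\mathbb P$-a.e. $\omega$ the following holds for all $\beta\in[0,\infty)$ and $h\in\mathbb R$: if $S^{\mathrm{que}}(\beta;1-)<h$ then $f^{\mathrm{que}}(\beta,h)=0$, and if $S^{\mathrm{que}}(\beta;1-)>h$ then $f^{\mathrm{que}}(\beta,h)>0$.
   Context: Let $K$ be a probability distribution on $\mathbb N=\{1,2,\dots\}$ such that $\lim_{n\to\infty}\log K(n)/\log n=-(1+\alpha)$ for some $\alpha\in[0,\infty)$. Let $\mu_0$ be a probability measure on $\mathbb R$ with mean $0$, variance $1$, and $M(\lambda):=\int e^{\lambda x}\,d\mu_0(x)<\infty$ for all $\lambda\in\mathbb R$. Let $\omega=(\omega_k)_{k\ge 0}$ be i.i.d. with law $\mu_0$ (law $\mathbb P$). For $\beta\ge 0$, $h\in\mathbb R$ put $Z_n^{\beta,h,\omega}=\sum_{N\ge1}\sum_{0=k_0<k_1<\dots<k_N=n}\prod_{i=1}^N K(k_i-k_{i-1})\,e^{\beta\omega_{k_{i-1}}-h}$; the quenched free energy $f^{\mathrm{que}}(\beta,h)=\lim_{n}\frac1n\log Z_n^{\beta,h,\omega}$ exists $\mathbb P$-a.s., is non-random and $\ge0$. Let $0=k_0<k_1<k_2<\cdots$ be a renewal process with i.i.d. increments of law $K$, with expectation $E_K$. For $z\in(0,1]$ define $S^{\mathrm{que}}(\beta;z):=\limsup_{N\to\infty}\frac1N\log E_K\big[z^{k_N}\exp\big(\beta\sum_{i=1}^N\omega_{k_{i-1}}\big)\big]$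 and $S^{\mathrm{que}}(\beta;1-):=\lim_{z\uparrow1}S^{\mathrm{que}}(\beta;z)$ (monotone limit). *)

theory Defs
  imports "HOL-Probability.Probability"
begin

definition Zpart :: "(nat \<Rightarrow> real) \<Rightarrow> real \<Rightarrow> real \<Rightarrow> (nat \<Rightarrow> real) \<Rightarrow> nat \<Rightarrow> real" where
  "Zpart K \<beta> h \<omega> n =
    (\<Sum>N\<in>{1..n}. \<Sum>k\<in>{k \<in> {0..N} \<rightarrow>\<^sub>E {0..n}. k 0 = 0 \<and> k N = n \<and> (\<forall>i<N. k i < k (Suc i))}.
        \<Prod>i\<in>{1..N}. K (k i - k (i - 1)) * exp (\<beta> * \<omega> (k (i - 1)) - h))"

text \<open>Quenched free energy: the (assumed to exist, non-random) a.s. limit of (1/n) log Z_n.\<close>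
definition f_que :: "real measure \<Rightarrow> (nat \<Rightarrow> real) \<Rightarrow> real \<Rightarrow> real \<Rightarrow> real" where
  "f_que \<mu>0 K \<beta> h =
    (THE c. AE \<omega> in (\<Pi>\<^sub>M i\<in>(UNIV::nat set). \<mu>0).
        (\<lambda>n. ln (Zpart K \<beta> h \<omega> n) / real n) \<longlonglongrightarrow> c)"

text \<open>E_K[z^{k_N} exp(beta sum_{i=1}^N omega_{k_{i-1}})] for the renewal process with
  i.i.d. increments t_0,...,t_{N-1} of law K (expectation = integral w.r.t. counting measure
  weighted by prod K(t_i)); k_{i} = t_0 + ... + t_{i-1}.\<close>
definition renewal_E :: "(nat \<Rightarrow> real) \<Rightarrow> real \<Rightarrow> real \<Rightarrow> (nat \<Rightarrow> real) \<Rightarrow> nat \<Rightarrow> ennreal" where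
  "renewal_E K z \<beta> \<omega> N =
    (\<integral>\<^sup>+ t. ennreal ((\<Prod>i<N. K (t i)) * z ^ (\<Sum>i<N. t i) * exp (\<beta> * (\<Sum>i<N. \<omega> (\<Sum>j<i. t j))))
       \<partial>count_space ({..<N} \<rightarrow>\<^sub>E (UNIV::nat set)))"

definition ln_enn :: "ennreal \<Rightarrow> ereal" where
  "ln_enn x = (if x = \<infinity> then \<infinity> else if x = 0 then -\<infinity> else ereal (ln (enn2real x)))"

definition S_que :: "(nat \<Rightarrow> real) \<Rightarrow> real \<Rightarrow> real \<Rightarrow> (nat \<Rightarrow> real) \<Rightarrow> ereal" where
  "S_que K \<beta> z \<omega> = limsup (\<lambda>N. ereal (1 / real N) * ln_enn (renewal_E K z \<beta> \<omega> N))"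

definition S_que_left :: "(nat \<Rightarrow> real) \<Rightarrow> real \<Rightarrow> (nat \<Rightarrow> real) \<Rightarrow> ereal" where
  "S_que_left K \<beta> \<omega> = Lim (at_left (1::real)) (\<lambda>z. S_que K \<beta> z \<omega>)"

end

theory Submission
  imports Defs "HOL-Real_Asymp.Real_Asymp"
begin


definition Kset :: "nat \<Rightarrow> nat \<Rightarrow> (nat \<Rightarrow> nat) set" where
  "Kset N n = {k \<in> {0..N} \<rightarrow>\<^sub>E {0..n}. k 0 = 0 \<and> k N = n \<and> (\<forall>i<N. k i < k (Suc i))}"

definition Kp :: "(nat \<Rightarrow> real) \<Rightarrow> nat \<Rightarrow> (nat \<Rightarrow> nat) \<Rightarrow> real" where
  "Kp K N k = (\<Prod>i\<in>{1..N}. K (k i - k (i - 1)))"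

definition Sw :: "(nat \<Rightarrow> real) \<Rightarrow> nat \<Rightarrow> (nat \<Rightarrow> nat) \<Rightarrow> real" where
  "Sw \<omega> N k = (\<Sum>i\<in>{1..N}. \<omega> (k (i - 1)))"

lemma Kset_mono:
  assumes "k \<in> Kset N n" "i < j" "j \<le> N"
  shows "k i < k j"
  using assms(2,3)
proof (induction j)
  case 0 then show ?case by simp
next
  case (Suc j)
  have s: "k j < k (Suc j)" using assms(1) Suc.prems unfolding Kset_def by auto
  show ?case
  proof (cases "i = j")
    case True then show ?thesis using s by simp
  next
    case False then have "k i < k j" using Suc by auto
    then show ?thesis using s by simp
  qed
qed

lemma Kset_finite: "finite (Kset N n)"
proof -
  have "Kset N n \<subseteq> {0..N} \<rightarrow>\<^sub>E {0..n}" unfolding Kset_def by auto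
  then show ?thesis by (rule finite_subset) (intro finite_PiE, auto)
qed

lemma Kset_empty: "n < N \<Longrightarrow> Kset N n = {}"
proof (rule ccontr)
  assume "n < N" "Kset N n \<noteq> {}"
  then obtain k where k: "k \<in> Kset N n" by auto
  have "i \<le> k i" if "i \<le> N" for i using that
  proof (induction i)
    case 0 then show ?case by simp
  next
    case (Suc i) then show ?case using Kset_mono[OF k, of i "Suc i"] by simp
  qed
  then have "N \<le> k N" by simp
  with k \<open>n < N\<close> show False unfolding Kset_def by simp
qed

lemma Kset_card: "card (Kset N n) \<le> (n+1) ^ (N+1)"
proof -
  have "Kset N n \<subseteq> {0..N} \<rightarrow>\<^sub>E {0..n}" unfolding Kset_def by auto
  then have "card (Kset N n) \<le> card ({0..N} \<rightarrow>\<^sub>E {0..n})"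
    by (intro card_mono) (auto intro!: finite_PiE)
  also have "\<dots> = (n+1)^(N+1)" by (simp add: card_PiE)
  finally show ?thesis .
qed

lemma Zpart_alt:
  "Zpart K \<beta> h \<omega> n = (\<Sum>N\<in>{1..n}. \<Sum>k\<in>Kset N n. Kp K N k * exp (\<beta> * Sw \<omega> N k - h * N))"
  unfolding Zpart_def Kset_def[symmetric]
proof (intro sum.cong refl)
  fix N k
  have "(\<Prod>i\<in>{1..N}. K (k i - k (i - 1)) * exp (\<beta> * \<omega> (k (i - 1)) - h))
     = Kp K N k * (\<Prod>i\<in>{1..N}. exp (\<beta> * \<omega> (k (i - 1)) - h))"
    unfolding Kp_def by (rule prod.distrib)
  also have "(\<Prod>i\<in>{1..N}. exp (\<beta> * \<omega> (k (i - 1)) - h)) = exp (\<Sum>i\<in>{1..N}. \<beta> * \<omega> (k (i - 1)) - h)"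
    by (simp add: exp_sum)
  also have "(\<Sum>i\<in>{1..N}. \<beta> * \<omega> (k (i - 1)) - h) = \<beta> * Sw \<omega> N k - h * N"
    unfolding Sw_def by (simp add: sum_subtractf sum_distrib_left)
  finally show "(\<Prod>i\<in>{1..N}. K (k i - k (i - 1)) * exp (\<beta> * \<omega> (k (i - 1)) - h)) =
         Kp K N k * exp (\<beta> * Sw \<omega> N k - h * N)" .
qed

definition W :: "(nat \<Rightarrow> real) \<Rightarrow> real \<Rightarrow> (nat \<Rightarrow> real) \<Rightarrow> nat \<Rightarrow> nat \<Rightarrow> real" where
  "W K \<beta> \<omega> N n = (\<Sum>k\<in>Kset N n. Kp K N k * exp (\<beta> * Sw \<omega> N k))"

definition gR :: "(nat \<Rightarrow> real) \<Rightarrow> real \<Rightarrow> real \<Rightarrow> (nat \<Rightarrow> real) \<Rightarrow> nat \<Rightarrow> (nat \<Rightarrow> nat) \<Rightarrow> real" where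
  "gR K z \<beta> \<omega> N t = (\<Prod>i<N. K (t i)) * z ^ (\<Sum>i<N. t i) * exp (\<beta> * (\<Sum>i<N. \<omega> (\<Sum>j<i. t j)))"

definition Tset :: "nat \<Rightarrow> nat \<Rightarrow> (nat \<Rightarrow> nat) set" where
  "Tset N m = {t \<in> {..<N} \<rightarrow>\<^sub>E (UNIV::nat set). (\<Sum>i<N. t i) = m}"

lemma Tset_finite: "finite (Tset N m)"
proof -
  have "Tset N m \<subseteq> {..<N} \<rightarrow>\<^sub>E {0..m}"
  proof
    fix t assume t: "t \<in> Tset N m"
    have "t i \<le> m" if "i < N" for i
    proof -
      have "t i \<le> (\<Sum>i<N. t i)" using that by (intro member_le_sum) auto
      then show ?thesis using t unfolding Tset_def by simp
    qed
    then show "t \<in> {..<N} \<rightarrow>\<^sub>E {0..m}" using t unfolding Tset_def by auto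
  qed
  then show ?thesis by (rule finite_subset) (intro finite_PiE, auto)
qed

lemma telescope_nat:
  assumes "\<And>j. j < i \<Longrightarrow> (k j::nat) \<le> k (Suc j)"
  shows "(\<Sum>j<i. k (Suc j) - k j) = k i - k 0 \<and> k 0 \<le> k i"
  using assms
proof (induction i)
  case 0 then show ?case by simp
next
  case (Suc i)
  then have IH: "(\<Sum>j<i. k (Suc j) - k j) = k i - k 0" "k 0 \<le> k i" by auto
  have "k i \<le> k (Suc i)" using Suc.prems by simp
  then show ?case using IH by simp
qed

lemma Tset_sum:
  assumes K0: "K 0 = 0"
  shows "(\<Sum>t\<in>Tset N m. gR K z \<beta> \<omega> N t) = z ^ m * W K \<beta> \<omega> N m"
proof -
  define Pos where "Pos = {t \<in> Tset N m. \<forall>i<N. 0 < t i}"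
  have "(\<Sum>t\<in>Tset N m. gR K z \<beta> \<omega> N t) = (\<Sum>t\<in>Pos. gR K z \<beta> \<omega> N t)"
  proof (rule sum.mono_neutral_right)
    show "finite (Tset N m)" by (rule Tset_finite)
    show "Pos \<subseteq> Tset N m" unfolding Pos_def by auto
    show "\<forall>t\<in>Tset N m - Pos. gR K z \<beta> \<omega> N t = 0"
    proof
      fix t assume "t \<in> Tset N m - Pos"
      then obtain i where "i < N" "t i = 0" unfolding Pos_def by auto
      then have "(\<Prod>i<N. K (t i)) = 0" using K0 by (intro prod_zero) (auto intro!: bexI[of _ i])
      then show "gR K z \<beta> \<omega> N t = 0" unfolding gR_def by simp
    qed
  qed
  also have "\<dots> = (\<Sum>k\<in>Kset N m. z ^ m * (Kp K N k * exp (\<beta> * Sw \<omega> N k)))"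
  proof (rule sum.reindex_bij_witness[where j = "\<lambda>t. restrict (\<lambda>i. \<Sum>j<i. t j) {0..N}"
        and i = "\<lambda>k. restrict (\<lambda>i. k (Suc i) - k i) {..<N}"])
    fix t assume t: "t \<in> Pos"
    then have tP: "t \<in> {..<N} \<rightarrow>\<^sub>E UNIV" "(\<Sum>i<N. t i) = m" "\<And>i. i < N \<Longrightarrow> 0 < t i"
      unfolding Pos_def Tset_def by auto
    show "restrict (\<lambda>i. restrict (\<lambda>i. \<Sum>j<i. t j) {0..N} (Suc i) - restrict (\<lambda>i. \<Sum>j<i. t j) {0..N} i) {..<N} = t"
    proof (rule ext)
      fix i show "restrict (\<lambda>i. restrict (\<lambda>i. \<Sum>j<i. t j) {0..N} (Suc i) - restrict (\<lambda>i. \<Sum>j<i. t j) {0..N} i) {..<N} i = t i"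
        using tP(1) by (cases "i < N") (auto simp: PiE_def extensional_def)
    qed
    have le: "(\<Sum>j<i. t j) \<le> m" if "i \<le> N" for i
    proof -
      have "(\<Sum>j<i. t j) \<le> (\<Sum>j<N. t j)" using that by (intro sum_mono2) auto
      then show ?thesis using tP by simp
    qed
    show "restrict (\<lambda>i. \<Sum>j<i. t j) {0..N} \<in> Kset N m"
      unfolding Kset_def using le tP(2,3) by (auto simp: PiE_def)
    show "z ^ m * (Kp K N (restrict (\<lambda>i. \<Sum>j<i. t j) {0..N}) * exp (\<beta> * Sw \<omega> N (restrict (\<lambda>i. \<Sum>j<i. t j) {0..N}))) = gR K z \<beta> \<omega> N t"
    proof -
      have "Kp K N (restrict (\<lambda>i. \<Sum>j<i. t j) {0..N}) = (\<Prod>i<N. K (t i))"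
        unfolding Kp_def One_nat_def prod.atLeast1_atMost_eq by (intro prod.cong) auto
      moreover have "Sw \<omega> N (restrict (\<lambda>i. \<Sum>j<i. t j) {0..N}) = (\<Sum>i<N. \<omega> (\<Sum>j<i. t j))"
        unfolding Sw_def One_nat_def sum.atLeast1_atMost_eq by (intro sum.cong) auto
      ultimately show ?thesis unfolding gR_def using tP(2) by simp
    qed
  next
    fix k assume k: "k \<in> Kset N m"
    have mono: "k j \<le> k (Suc j)" if "j < N" for j using k that unfolding Kset_def by auto
    have tel: "(\<Sum>j<i. k (Suc j) - k j) = k i" if "i \<le> N" for i
      using telescope_nat[of i k] mono that k unfolding Kset_def by auto
    show "restrict (\<lambda>i. \<Sum>j<i. restrict (\<lambda>i. k (Suc i) - k i) {..<N} j) {0..N} = k"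
    proof (rule ext)
      fix i
      show "restrict (\<lambda>i. \<Sum>j<i. restrict (\<lambda>i. k (Suc i) - k i) {..<N} j) {0..N} i = k i"
      proof (cases "i \<le> N")
        case True
        have "(\<Sum>j<i. restrict (\<lambda>i. k (Suc i) - k i) {..<N} j) = (\<Sum>j<i. k (Suc j) - k j)"
          using True by (intro sum.cong) auto
        then show ?thesis using tel[OF True] True by simp
      next
        case False then show ?thesis using k unfolding Kset_def by (auto simp: PiE_def extensional_def)
      qed
    qed
    have "(\<Sum>i<N. restrict (\<lambda>i. k (Suc i) - k i) {..<N} i) = (\<Sum>j<N. k (Suc j) - k j)"
      by (intro sum.cong) auto
    also have "\<dots> = m" using tel[of N] k unfolding Kset_def by simp
    finally show "restrict (\<lambda>i. k (Suc i) - k i) {..<N} \<in> Pos"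
      unfolding Pos_def Tset_def using k unfolding Kset_def by auto
  qed
  also have "\<dots> = z ^ m * W K \<beta> \<omega> N m" unfolding W_def by (simp add: sum_distrib_left)
  finally show ?thesis .
qed

lemma gR_nonneg: "(\<And>n. K n \<ge> 0) \<Longrightarrow> z \<ge> 0 \<Longrightarrow> gR K z \<beta> \<omega> N t \<ge> 0"
  unfolding gR_def by (intro mult_nonneg_nonneg prod_nonneg) auto

lemma renewal_E_eq:
  assumes K0: "K 0 = 0" and Kn: "\<And>n. K n \<ge> 0" and z: "z \<ge> 0"
  shows "renewal_E K z \<beta> \<omega> N = (\<Sum>m. ennreal (z ^ m * W K \<beta> \<omega> N m))"
proof -
  define A where "A = {..<N} \<rightarrow>\<^sub>E (UNIV::nat set)"
  define g where "g = (\<lambda>t. ennreal (gR K z \<beta> \<omega> N t))"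
  have "renewal_E K z \<beta> \<omega> N = (\<integral>\<^sup>+ t. g t \<partial>count_space A)"
    unfolding renewal_E_def gR_def A_def g_def by (rule refl)
  also have "\<dots> = (\<integral>\<^sup>+ t. (\<Sum>m. g t * indicator (Tset N m) t) \<partial>count_space A)"
  proof (intro nn_integral_cong)
    fix t assume "t \<in> space (count_space A)"
    then have tA: "t \<in> A" by simp
    have ind: "indicator (Tset N m) t = (if m = (\<Sum>i<N. t i) then 1 else (0::ennreal))" for m
    proof -
      have "t \<in> Tset N m \<longleftrightarrow> m = (\<Sum>i<N. t i)" using tA unfolding Tset_def A_def by blast
      then show ?thesis by (simp add: indicator_def)
    qed
    have e: "(\<lambda>m. g t * indicator (Tset N m) t) = (\<lambda>m. if m = (\<Sum>i<N. t i) then g t else 0)"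
      by (rule ext) (simp add: ind)
    have "(\<lambda>m. if m = (\<Sum>i<N. t i) then g t else 0) sums g t"
      by (rule sums_single[of "\<Sum>i<N. t i" "\<lambda>_. g t"])
    then show "g t = (\<Sum>m. g t * indicator (Tset N m) t)"
      unfolding e by (rule sums_unique)
  qed
  also have "\<dots> = (\<Sum>m. \<integral>\<^sup>+ t. g t * indicator (Tset N m) t \<partial>count_space A)"
    by (rule nn_integral_suminf) simp
  also have "\<dots> = (\<Sum>m. ennreal (z ^ m * W K \<beta> \<omega> N m))"
  proof (intro suminf_cong)
    fix m
    have sub: "Tset N m \<subseteq> A" unfolding Tset_def A_def by auto
    have "(\<integral>\<^sup>+ t. g t * indicator (Tset N m) t \<partial>count_space A)
        = (\<Sum>t\<in>Tset N m. g t * emeasure (count_space A) {t})"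
      by (rule nn_integral_indicator_finite) (use sub in \<open>auto simp: Tset_finite\<close>)
    also have "\<dots> = (\<Sum>t\<in>Tset N m. g t)"
      by (intro sum.cong refl) (use sub in auto)
    also have "\<dots> = ennreal (\<Sum>t\<in>Tset N m. gR K z \<beta> \<omega> N t)"
      unfolding g_def by (rule sum_ennreal) (use gR_nonneg[OF Kn z] in auto)
    also have "\<dots> = ennreal (z ^ m * W K \<beta> \<omega> N m)" using Tset_sum[of K, OF K0] by simp
    finally show "(\<integral>\<^sup>+ t. g t * indicator (Tset N m) t \<partial>count_space A) = ennreal (z ^ m * W K \<beta> \<omega> N m)" .
  qed
  finally show ?thesis .
qed

lemma K_le1: assumes "\<And>n. K n \<ge> 0" "K sums 1" shows "K n \<le> (1::real)"
proof -
  have "sum K {n} \<le> suminf K"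
    using assms by (intro sum_le_suminf) (auto simp: sums_iff)
  then show ?thesis using assms(2) by (simp add: sums_iff)
qed

lemma Kp_nonneg: "(\<And>n. K n \<ge> 0) \<Longrightarrow> Kp K N k \<ge> 0"
  unfolding Kp_def by (intro prod_nonneg) auto

lemma Kp_le1: "(\<And>n. K n \<ge> 0) \<Longrightarrow> (\<And>n. K n \<le> 1) \<Longrightarrow> Kp K N k \<le> 1"
  unfolding Kp_def by (intro prod_le_1) auto

lemma W_nonneg: "(\<And>n. K n \<ge> 0) \<Longrightarrow> W K \<beta> \<omega> N n \<ge> 0"
  unfolding W_def by (intro sum_nonneg mult_nonneg_nonneg Kp_nonneg) auto

lemma W_empty: "n < N \<Longrightarrow> W K \<beta> \<omega> N n = 0"
  unfolding W_def by (simp add: Kset_empty)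

lemma Zpart_W:
  "Zpart K \<beta> h \<omega> n = (\<Sum>N\<in>{1..n}. exp (- h * N) * W K \<beta> \<omega> N n)"
  unfolding Zpart_alt W_def
  by (intro sum.cong refl) (simp add: sum_distrib_left exp_diff exp_minus field_simps)

lemma Zpart_nonneg: "(\<And>n. K n \<ge> 0) \<Longrightarrow> Zpart K \<beta> h \<omega> n \<ge> 0"
  unfolding Zpart_W by (intro sum_nonneg mult_nonneg_nonneg W_nonneg) auto

lemma W_le_Zpart:
  assumes "\<And>n. K n \<ge> 0" "1 \<le> N" "N \<le> n"
  shows "exp (- h * N) * W K \<beta> \<omega> N n \<le> Zpart K \<beta> h \<omega> n"
  unfolding Zpart_W using assms
  by (intro member_le_sum[where f = "\<lambda>N. exp (- h * N) * W K \<beta> \<omega> N n"] mult_nonneg_nonneg W_nonneg) auto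

lemma Zpart_lower:
  assumes Kn: "\<And>n. K n \<ge> 0" and n: "1 \<le> n"
  shows "K n * exp (\<beta> * \<omega> 0 - h) \<le> Zpart K \<beta> h \<omega> n"
proof -
  define k0 where "k0 = restrict (\<lambda>i. if i = 0 then 0 else n) {0..1::nat}"
  have k0: "k0 \<in> Kset 1 n" unfolding k0_def Kset_def using n by auto
  have "K n * exp (\<beta> * \<omega> 0 - h) = Kp K 1 k0 * exp (\<beta> * Sw \<omega> 1 k0 - h * 1)"
    unfolding Kp_def Sw_def k0_def using n by simp
  also have "\<dots> \<le> (\<Sum>k\<in>Kset 1 n. Kp K 1 k * exp (\<beta> * Sw \<omega> 1 k - h * 1))"
    using k0 by (intro member_le_sum mult_nonneg_nonneg Kp_nonneg Kn Kset_finite) auto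
  also have "\<dots> \<le> Zpart K \<beta> h \<omega> n"
  proof -
    have "(\<Sum>k\<in>Kset N n. Kp K N k * exp (\<beta> * Sw \<omega> N k - h * N)) \<le> Zpart K \<beta> h \<omega> n"
      if "N \<in> {1..n}" for N
      unfolding Zpart_alt using that
      by (intro member_le_sum[where f = "\<lambda>N. \<Sum>k\<in>Kset N n. Kp K N k * exp (\<beta> * Sw \<omega> N k - h * N)"]
        sum_nonneg mult_nonneg_nonneg Kp_nonneg Kn) auto
    from this[of 1] show ?thesis using n by simp
  qed
  finally show ?thesis .
qed

lemma Kset_sum_abs:
  assumes k: "k \<in> Kset N n" and that: "\<And>j. f j \<ge> 0"
  shows "(\<Sum>i\<in>{1..N}. f (k (i - 1))) \<le> (\<Sum>j<n. f j :: real)"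
proof -
  have inj: "inj_on k {..<N}"
  proof (rule inj_onI)
    fix a b assume "a \<in> {..<N}" "b \<in> {..<N}" "k a = k b"
    then show "a = b" using Kset_mono[OF k, of a b] Kset_mono[OF k, of b a]
      by (cases a b rule: linorder_cases) auto
  qed
  have sub: "k ` {..<N} \<subseteq> {..<n}"
  proof
    fix x assume "x \<in> k ` {..<N}"
    then obtain i where "i < N" "x = k i" by auto
    then show "x \<in> {..<n}" using Kset_mono[OF k, of i N] k unfolding Kset_def by auto
  qed
  have "(\<Sum>i\<in>{1..N}. f (k (i - 1))) = (\<Sum>i<N. f (k i))"
    unfolding One_nat_def sum.atLeast1_atMost_eq by simp
  also have "\<dots> = (\<Sum>j\<in>k ` {..<N}. f j)" using sum.reindex[OF inj, of f] by simp
  also have "\<dots> \<le> (\<Sum>j<n. f j)" using sub that by (intro sum_mono2) auto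
  finally show ?thesis .
qed

lemma Zpart_lip:
  assumes Kn: "\<And>n. K n \<ge> 0" and S: "(\<Sum>j<n. \<bar>\<omega> j\<bar>) \<le> S"
  shows "Zpart K \<beta> h \<omega> n \<le> exp (\<bar>\<beta> - \<beta>'\<bar> * S + \<bar>h - h'\<bar> * n) * Zpart K \<beta>' h' \<omega> n"
proof -
  have "Zpart K \<beta> h \<omega> n \<le> (\<Sum>N\<in>{1..n}. \<Sum>k\<in>Kset N n. exp (\<bar>\<beta> - \<beta>'\<bar> * S + \<bar>h - h'\<bar> * n) *
          (Kp K N k * exp (\<beta>' * Sw \<omega> N k - h' * N)))"
    unfolding Zpart_alt
  proof (intro sum_mono)
    fix N k assume N: "N \<in> {1..n}" and k: "k \<in> Kset N n"
    have "\<bar>Sw \<omega> N k\<bar> \<le> (\<Sum>i\<in>{1..N}. \<bar>\<omega> (k (i - 1))\<bar>)" unfolding Sw_def by (rule sum_abs)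
    also have "\<dots> \<le> S" using Kset_sum_abs[OF k, of "\<lambda>j. \<bar>\<omega> j\<bar>"] S by simp
    finally have sw: "\<bar>Sw \<omega> N k\<bar> \<le> S" .
    have "(\<beta> - \<beta>') * Sw \<omega> N k \<le> \<bar>\<beta> - \<beta>'\<bar> * S"
      by (rule order_trans[OF abs_ge_self]) (simp add: abs_mult mult_left_mono sw)
    moreover have "- (h - h') * N \<le> \<bar>h - h'\<bar> * n"
    proof -
      have "- (h - h') * N \<le> \<bar>h - h'\<bar> * N" by (intro mult_right_mono) auto
      also have "\<dots> \<le> \<bar>h - h'\<bar> * n" using N by (intro mult_left_mono) auto
      finally show ?thesis .
    qed
    ultimately have "\<beta> * Sw \<omega> N k - h * N \<le> (\<bar>\<beta> - \<beta>'\<bar> * S + \<bar>h - h'\<bar> * n) + (\<beta>' * Sw \<omega> N k - h' * N)"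
      by (simp add: algebra_simps)
    then have "exp (\<beta> * Sw \<omega> N k - h * N) \<le> exp (\<bar>\<beta> - \<beta>'\<bar> * S + \<bar>h - h'\<bar> * n) * exp (\<beta>' * Sw \<omega> N k - h' * N)"
      by (simp add: exp_add[symmetric])
    then show "Kp K N k * exp (\<beta> * Sw \<omega> N k - h * N) \<le> exp (\<bar>\<beta> - \<beta>'\<bar> * S + \<bar>h - h'\<bar> * n) * (Kp K N k * exp (\<beta>' * Sw \<omega> N k - h' * N))"
      using Kp_nonneg[OF Kn] by (simp add: mult_left_mono mult.left_commute)
  qed
  also have "\<dots> = exp (\<bar>\<beta> - \<beta>'\<bar> * S + \<bar>h - h'\<bar> * n) * Zpart K \<beta>' h' \<omega> n"
    unfolding Zpart_alt by (simp add: sum_distrib_left)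
  finally show ?thesis .
qed

lemma W_small:
  assumes Kn: "\<And>n. K n \<ge> 0" and K1: "\<And>n. K n \<le> 1" and b: "\<beta> \<ge> 0"
    and A: "A \<ge> 0" and om: "\<And>j. \<bar>\<omega> j\<bar> \<le> A + 2 * ln (real j + 1)"
  shows "W K \<beta> \<omega> N n \<le> (real n + 1) ^ (N + 1) * exp (\<beta> * N * (A + 2 * ln (real n + 1)))"
proof -
  have "W K \<beta> \<omega> N n \<le> (\<Sum>k\<in>Kset N n. exp (\<beta> * N * (A + 2 * ln (real n + 1))))"
    unfolding W_def
  proof (intro sum_mono)
    fix k assume k: "k \<in> Kset N n"
    have "\<bar>Sw \<omega> N k\<bar> \<le> (\<Sum>i\<in>{1..N}. \<bar>\<omega> (k (i - 1))\<bar>)" unfolding Sw_def by (rule sum_abs)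
    also have "\<dots> \<le> (\<Sum>i\<in>{1..N}. A + 2 * ln (real n + 1))"
    proof (intro sum_mono)
      fix i assume i: "i \<in> {1..N}"
      have "k (i - 1) \<le> n" using k i unfolding Kset_def by (auto simp: PiE_def Pi_def)
      then have "ln (real (k (i - 1)) + 1) \<le> ln (real n + 1)" by simp
      then show "\<bar>\<omega> (k (i - 1))\<bar> \<le> A + 2 * ln (real n + 1)" using om[of "k (i - 1)"] by linarith
    qed
    also have "\<dots> = N * (A + 2 * ln (real n + 1))" by simp
    finally have "\<beta> * Sw \<omega> N k \<le> \<beta> * (N * (A + 2 * ln (real n + 1)))"
      using b by (meson abs_le_D1 mult_left_mono)
    then have "exp (\<beta> * Sw \<omega> N k) \<le> exp (\<beta> * N * (A + 2 * ln (real n + 1)))" by (simp add: mult.assoc)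
    moreover have "Kp K N k \<le> 1" by (rule Kp_le1[OF Kn K1])
    ultimately show "Kp K N k * exp (\<beta> * Sw \<omega> N k) \<le> exp (\<beta> * N * (A + 2 * ln (real n + 1)))"
    proof -
      have "Kp K N k * exp (\<beta> * Sw \<omega> N k) \<le> 1 * exp (\<beta> * Sw \<omega> N k)"
        using \<open>Kp K N k \<le> 1\<close> by (intro mult_right_mono) auto
      then show ?thesis using \<open>exp (\<beta> * Sw \<omega> N k) \<le> _\<close> by linarith
    qed
  qed
  also have "\<dots> = card (Kset N n) * exp (\<beta> * N * (A + 2 * ln (real n + 1)))" by simp
  also have "\<dots> \<le> (real n + 1) ^ (N + 1) * exp (\<beta> * N * (A + 2 * ln (real n + 1)))"
  proof (intro mult_right_mono)
    have "real (card (Kset N n)) \<le> real ((n+1)^(N+1))" using Kset_card[of N n] by linarith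
    also have "real ((n+1)^(N+1)) = (real n + 1) ^ (N + 1)" by (simp only: of_nat_power of_nat_add of_nat_1)
    finally show "real (card (Kset N n)) \<le> (real n + 1) ^ (N + 1)" .
  qed simp
  finally show ?thesis .
qed



lemma exp_abs_integrable:
  assumes mu_sets: "sets \<mu>0 = sets borel" and mgf: "\<And>l. integrable \<mu>0 (\<lambda>x. exp (l * x))"
  shows "integrable \<mu>0 (\<lambda>x. exp \<bar>x::real\<bar>)"
proof (rule Bochner_Integration.integrable_bound)
  show "integrable \<mu>0 (\<lambda>x. exp (1 * x) + exp ((-1) * x))"
    by (rule Bochner_Integration.integrable_add[OF mgf[of 1] mgf[of "-1"]])
  note mu_sets[measurable_cong]
  show "(\<lambda>x. exp \<bar>x\<bar>) \<in> borel_measurable \<mu>0" by measurable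
  show "AE x in \<mu>0. norm (exp \<bar>x\<bar>) \<le> norm (exp (1 * x) + exp ((-1) * x))"
  proof (intro AE_I2)
    fix x :: real
    have "0 < exp x" "0 < exp (-x)" by auto
    then show "norm (exp \<bar>x\<bar>) \<le> norm (exp (1 * x) + exp ((-1) * x))"
      by (cases "x < 0") auto
  qed
qed

lemma chernoff:
  fixes \<mu>0 :: "real measure"
  assumes mu_prob: "prob_space \<mu>0" and mu_sets: "sets \<mu>0 = sets borel"
    and mgf: "\<And>l. integrable \<mu>0 (\<lambda>x. exp (l * x))" and J: "finite J"
  shows "measure (PiM UNIV (\<lambda>_::nat. \<mu>0)) {\<omega> \<in> space (PiM UNIV (\<lambda>_::nat. \<mu>0)). a < (\<Sum>k\<in>J. \<bar>\<omega> k\<bar>)}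
     \<le> exp (- a) * (\<integral>x. exp \<bar>x\<bar> \<partial>\<mu>0) ^ card J"
proof -
  interpret M0: prob_space \<mu>0 by (rule mu_prob)
  interpret PP: product_prob_space "\<lambda>_::nat. \<mu>0" UNIV by unfold_locales
  note mu_sets[measurable_cong]
  define P where "P = PiM UNIV (\<lambda>_::nat. \<mu>0)"
  define S where "S = {\<omega> \<in> space P. a < (\<Sum>k\<in>J. \<bar>\<omega> k\<bar>)}"
  define Mr where "Mr = (\<integral>x. exp \<bar>x\<bar> \<partial>\<mu>0)"
  have intg: "integrable \<mu>0 (\<lambda>x. exp \<bar>x::real\<bar>)" by (rule exp_abs_integrable[OF mu_sets mgf])
  have Mr_nn: "(\<integral>\<^sup>+ x. ennreal (exp \<bar>x\<bar>) \<partial>\<mu>0) = ennreal Mr"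
    unfolding Mr_def by (rule nn_integral_eq_integral[OF intg]) auto
  have Sm: "S \<in> sets P" unfolding S_def P_def by measurable
  have "emeasure P S * ennreal (exp a) = (\<integral>\<^sup>+ \<omega>. ennreal (exp a) * indicator S \<omega> \<partial>P)"
    using Sm by (simp add: nn_integral_cmult_indicator mult.commute)
  also have "\<dots> \<le> (\<integral>\<^sup>+ \<omega>. ennreal (exp (\<Sum>k\<in>J. \<bar>\<omega> k\<bar>)) \<partial>P)"
    by (intro nn_integral_mono) (auto simp: S_def indicator_def)
  also have "\<dots> = (\<integral>\<^sup>+ \<omega>. (\<Prod>k\<in>J. ennreal (exp \<bar>restrict \<omega> J k\<bar>)) \<partial>P)"
    by (intro nn_integral_cong) (simp add: exp_sum prod_ennreal J)
  also have "\<dots> = (\<integral>\<^sup>+ x. (\<Prod>k\<in>J. ennreal (exp \<bar>x k\<bar>)) \<partial>distr P (PiM J (\<lambda>_. \<mu>0)) (\<lambda>\<omega>. restrict \<omega> J))"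
    unfolding P_def by (rule nn_integral_distr[symmetric]) measurable
  also have "\<dots> = (\<integral>\<^sup>+ x. (\<Prod>k\<in>J. ennreal (exp \<bar>x k\<bar>)) \<partial>PiM J (\<lambda>_. \<mu>0))"
    unfolding P_def using J by (simp add: PP.distr_PiM_restrict_finite)
  also have "\<dots> = (\<Prod>k\<in>J. \<integral>\<^sup>+ x. ennreal (exp \<bar>x\<bar>) \<partial>\<mu>0)"
    by (rule PP.product_nn_integral_prod[OF J]) measurable
  also have "\<dots> = ennreal (Mr ^ card J)"
    using Mr_nn by (simp add: ennreal_power Mr_def)
  finally have le: "emeasure P S * ennreal (exp a) \<le> ennreal (Mr ^ card J)" .
  have Mr0: "Mr \<ge> 0" unfolding Mr_def by (intro integral_nonneg_AE) auto
  have "emeasure P S = ennreal (measure P S)"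
    unfolding P_def by (simp add: PP.emeasure_eq_measure)
  then have "ennreal (measure P S * exp a) \<le> ennreal (Mr ^ card J)"
    using le by (simp add: ennreal_mult')
  then have "measure P S * exp a \<le> Mr ^ card J"
    using Mr0 by (subst (asm) ennreal_le_iff) auto
  then have "measure P S \<le> Mr ^ card J / exp a" by (simp add: field_simps)
  then show ?thesis unfolding S_def P_def Mr_def by (simp add: exp_minus field_simps)
qed

lemma Mr_ge1:
  fixes \<mu>0 :: "real measure"
  assumes mu_prob: "prob_space \<mu>0" and mu_sets: "sets \<mu>0 = sets borel"
    and mgf: "\<And>l. integrable \<mu>0 (\<lambda>x. exp (l * x))"
  shows "(\<integral>x. exp \<bar>x\<bar> \<partial>\<mu>0) \<ge> 1"
proof -
  interpret M0: prob_space \<mu>0 by (rule mu_prob)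
  have "(\<integral>x. 1 \<partial>\<mu>0) \<le> (\<integral>x. exp \<bar>x\<bar> \<partial>\<mu>0)"
    by (intro integral_mono exp_abs_integrable[OF mu_sets mgf]) auto
  then show ?thesis using M0.prob_space by simp
qed

lemma sum_abs_linear:
  fixes \<mu>0 :: "real measure"
  assumes mu_prob: "prob_space \<mu>0" and mu_sets: "sets \<mu>0 = sets borel"
    and mgf: "\<And>l. integrable \<mu>0 (\<lambda>x. exp (l * x))"
  shows "\<exists>C::real>0. AE \<omega> in PiM UNIV (\<lambda>_::nat. \<mu>0). eventually (\<lambda>n. (\<Sum>k<n. \<bar>\<omega> k\<bar>) \<le> C * real n) sequentially"
proof -
  interpret M0: prob_space \<mu>0 by (rule mu_prob)
  interpret PP: product_prob_space "\<lambda>_::nat. \<mu>0" UNIV by unfold_locales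
  note mu_sets[measurable_cong]
  define P where "P = PiM UNIV (\<lambda>_::nat. \<mu>0)"
  define Mr where "Mr = (\<integral>x. exp \<bar>x\<bar> \<partial>\<mu>0)"
  have Mr1: "Mr \<ge> 1" unfolding Mr_def by (rule Mr_ge1[OF mu_prob mu_sets mgf])
  define C where "C = ln Mr + 1"
  have C0: "C > 0" unfolding C_def using Mr1 using ln_ge_zero[of Mr] by linarith
  define A where "A n = {\<omega> \<in> space P. C * n < (\<Sum>k<n. \<bar>\<omega> k\<bar>)}" for n :: nat
  have Am: "A n \<in> sets P" for n unfolding A_def P_def by measurable
  have bnd: "measure P (A n) \<le> exp (- 1) ^ n" for n
  proof -
    have "measure P (A n) \<le> exp (- (C * n)) * Mr ^ card {..<n}"
      unfolding A_def P_def Mr_def by (rule chernoff[OF mu_prob mu_sets mgf]) simp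
    also have "\<dots> = exp (- 1) ^ n"
    proof -
      have e: "Mr ^ n = exp (real n * ln Mr)" using Mr1 by (simp add: exp_of_nat_mult)
      have "exp (- (C * n)) * Mr ^ n = exp (- (C * n) + real n * ln Mr)" unfolding exp_add e by (rule refl)
      also have "- (C * n) + real n * ln Mr = real n * (-1)" unfolding C_def by (simp add: algebra_simps)
      also have "exp (real n * (-1)) = exp (-1) ^ n" by (rule exp_of_nat_mult)
      finally show ?thesis by simp
    qed
    finally show ?thesis .
  qed
  have summ: "summable (\<lambda>n. measure P (A n))"
  proof (rule summable_comparison_test)
    show "\<exists>N. \<forall>n\<ge>N. norm (measure P (A n)) \<le> exp (- 1) ^ n" using bnd by auto
    show "summable (\<lambda>n. exp (- 1::real) ^ n)" by (rule summable_geometric) simp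
  qed
  have "AE \<omega> in P. eventually (\<lambda>n. \<omega> \<in> space P - A n) sequentially"
  proof (rule borel_cantelli_AE1[OF Am _ summ])
    fix n show "emeasure P (A n) < \<infinity>"
      unfolding P_def using PP.P.emeasure_finite[of "A n"] by (simp add: less_top[symmetric])
  qed
  then have "AE \<omega> in P. eventually (\<lambda>n. (\<Sum>k<n. \<bar>\<omega> k\<bar>) \<le> C * n) sequentially"
  proof (rule eventually_mono)
    fix \<omega> assume "eventually (\<lambda>n. \<omega> \<in> space P - A n) sequentially"
    then show "eventually (\<lambda>n. (\<Sum>k<n. \<bar>\<omega> k\<bar>) \<le> C * n) sequentially"
      by (rule eventually_mono) (simp add: A_def not_less)
  qed
  then have "AE \<omega> in PiM UNIV (\<lambda>_::nat. \<mu>0). eventually (\<lambda>n. (\<Sum>k<n. \<bar>\<omega> k\<bar>) \<le> C * n) sequentially"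
    unfolding P_def .
  with C0 show ?thesis by (intro exI[of _ C] conjI)
qed

lemma max_log_bound:
  fixes \<mu>0 :: "real measure"
  assumes mu_prob: "prob_space \<mu>0" and mu_sets: "sets \<mu>0 = sets borel"
    and mgf: "\<And>l. integrable \<mu>0 (\<lambda>x. exp (l * x))"
  shows "AE \<omega> in PiM UNIV (\<lambda>_::nat. \<mu>0). \<exists>A\<ge>0. \<forall>j. \<bar>\<omega> j\<bar> \<le> A + 2 * ln (real j + 1)"
proof -
  interpret M0: prob_space \<mu>0 by (rule mu_prob)
  interpret PP: product_prob_space "\<lambda>_::nat. \<mu>0" UNIV by unfold_locales
  note mu_sets[measurable_cong]
  define P where "P = PiM UNIV (\<lambda>_::nat. \<mu>0)"
  define Mr where "Mr = (\<integral>x. exp \<bar>x\<bar> \<partial>\<mu>0)"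
  have Mr1: "Mr \<ge> 1" unfolding Mr_def by (rule Mr_ge1[OF mu_prob mu_sets mgf])
  define A where "A j = {\<omega> \<in> space P. 2 * ln (real j + 1) < (\<Sum>k\<in>{j}. \<bar>\<omega> k\<bar>)}" for j :: nat
  have Am: "A n \<in> sets P" for n unfolding A_def P_def by measurable
  have bnd: "measure P (A j) \<le> Mr * real (Suc j) powr (-2)" for j
  proof -
    have "measure P (A j) \<le> exp (- (2 * ln (real j + 1))) * Mr ^ card {j}"
      unfolding A_def P_def Mr_def by (rule chernoff[OF mu_prob mu_sets mgf]) simp
    also have "\<dots> = Mr * real (Suc j) powr (-2)"
      by (simp add: powr_def add.commute)
    finally show ?thesis .
  qed
  have summ: "summable (\<lambda>j. measure P (A j))"
  proof (rule summable_comparison_test)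
    show "\<exists>N. \<forall>n\<ge>N. norm (measure P (A n)) \<le> Mr * real (Suc n) powr (-2)" using bnd by auto
    have "summable (\<lambda>n. real n powr (-2))" by (simp add: summable_real_powr_iff)
    then have "summable (\<lambda>n. real (Suc n) powr (-2))" by (subst summable_Suc_iff)
    then show "summable (\<lambda>n. Mr * real (Suc n) powr (-2))" by (rule summable_mult)
  qed
  have "AE \<omega> in P. eventually (\<lambda>n. \<omega> \<in> space P - A n) sequentially"
  proof (rule borel_cantelli_AE1[OF Am _ summ])
    fix n show "emeasure P (A n) < \<infinity>"
      unfolding P_def using PP.P.emeasure_finite[of "A n"] by (simp add: less_top[symmetric])
  qed
  then show ?thesis unfolding P_def[symmetric]
  proof (rule AE_mp, intro AE_I2 impI)
    fix \<omega> assume "eventually (\<lambda>n. \<omega> \<in> space P - A n) sequentially" "\<omega> \<in> space P"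
    then obtain j0 where j0: "\<And>j. j \<ge> j0 \<Longrightarrow> \<bar>\<omega> j\<bar> \<le> 2 * ln (real j + 1)"
      unfolding eventually_sequentially A_def by force
    define B where "B = (\<Sum>j<j0. \<bar>\<omega> j\<bar>)"
    have "\<bar>\<omega> j\<bar> \<le> B + 2 * ln (real j + 1)" for j
    proof (cases "j < j0")
      case True
      then have "\<bar>\<omega> j\<bar> \<le> B" unfolding B_def by (intro member_le_sum[where f = "\<lambda>j. \<bar>\<omega> j\<bar>"]) auto
      moreover have "0 \<le> ln (real j + 1)" by simp
      ultimately show ?thesis by linarith
    next
      case False
      moreover have "0 \<le> B" unfolding B_def by (intro sum_nonneg) auto
      ultimately show ?thesis using j0[of j] by simp
    qed
    moreover have "0 \<le> B" unfolding B_def by (intro sum_nonneg) auto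
    ultimately show "\<exists>A\<ge>0. \<forall>j. \<bar>\<omega> j\<bar> \<le> A + 2 * ln (real j + 1)" by blast
  qed
qed



definition Fn :: "(nat \<Rightarrow> real) \<Rightarrow> real \<Rightarrow> real \<Rightarrow> (nat \<Rightarrow> real) \<Rightarrow> nat \<Rightarrow> real" where
  "Fn K \<beta> h \<omega> n = ln (Zpart K \<beta> h \<omega> n) / real n"

lemma Zpart_pos:
  assumes Kn: "\<And>n. K n \<ge> 0" and n: "1 \<le> n" and Kp: "K n > 0"
  shows "Zpart K \<beta> h \<omega> n > 0"
  using Zpart_lower[where K=K and n=n and \<beta>=\<beta> and \<omega>=\<omega> and h=h, OF Kn n] Kp by (smt (verit) exp_gt_zero mult_pos_pos)

lemma lnK_over_n:
  assumes K_tail: "(\<lambda>n. ln (K n) / ln (real n)) \<longlonglongrightarrow> L"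
  shows "(\<lambda>n. ln (K n) / real n) \<longlonglongrightarrow> 0"
proof -
  have "(\<lambda>n. ln (real n) / real n) \<longlonglongrightarrow> 0" by real_asymp
  from tendsto_mult[OF K_tail this]
  have "(\<lambda>n. ln (K n) / ln (real n) * (ln (real n) / real n)) \<longlonglongrightarrow> 0" by simp
  moreover have "eventually (\<lambda>n. ln (K n) / ln (real n) * (ln (real n) / real n) = ln (K n) / real n) sequentially"
  proof (rule eventually_mono[OF eventually_ge_at_top[of 2]])
    fix n :: nat assume "2 \<le> n"
    then have "ln (real n) > 0" by simp
    then show "ln (K n) / ln (real n) * (ln (real n) / real n) = ln (K n) / real n" by simp
  qed
  ultimately show ?thesis by (rule Lim_transform_eventually)
qed

lemma c_nonneg:
  assumes Kn: "\<And>n. K n \<ge> 0" and Kpos: "eventually (\<lambda>n. K n > 0) sequentially"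
    and lnK: "(\<lambda>n. ln (K n) / real n) \<longlonglongrightarrow> 0"
    and conv: "(\<lambda>n. Fn K \<beta> h \<omega> n) \<longlonglongrightarrow> c"
  shows "c \<ge> 0"
proof (rule tendsto_le[OF sequentially_bot conv])
  have "(\<lambda>n. ln (K n) / real n + (\<beta> * \<omega> 0 - h) / real n) \<longlonglongrightarrow> 0 + 0"
    by (intro tendsto_add lnK lim_const_over_n)
  then show "(\<lambda>n. ln (K n) / real n + (\<beta> * \<omega> 0 - h) / real n) \<longlonglongrightarrow> 0" by simp
  show "eventually (\<lambda>n. ln (K n) / real n + (\<beta> * \<omega> 0 - h) / real n \<le> Fn K \<beta> h \<omega> n) sequentially"
  proof (rule eventually_mono[OF eventually_conj[OF Kpos eventually_ge_at_top[of 1]]])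
    fix n :: nat assume "0 < K n \<and> 1 \<le> n"
    then have Kp: "0 < K n" and n: "1 \<le> n" by auto
    have "ln (K n * exp (\<beta> * \<omega> 0 - h)) \<le> ln (Zpart K \<beta> h \<omega> n)"
      using Zpart_lower[where K=K and n=n and \<beta>=\<beta> and \<omega>=\<omega> and h=h, OF Kn n] Kp
        Zpart_pos[where K=K and n=n and \<beta>=\<beta> and \<omega>=\<omega> and h=h, OF Kn n Kp] by (subst ln_le_cancel_iff) auto
    then have "ln (K n) + (\<beta> * \<omega> 0 - h) \<le> ln (Zpart K \<beta> h \<omega> n)"
      using Kp by (simp add: ln_mult)
    then have "(ln (K n) + (\<beta> * \<omega> 0 - h)) / real n \<le> ln (Zpart K \<beta> h \<omega> n) / real n"
      by (intro divide_right_mono) auto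
    then show "ln (K n) / real n + (\<beta> * \<omega> 0 - h) / real n \<le> Fn K \<beta> h \<omega> n"
      unfolding Fn_def by (simp add: add_divide_distrib)
  qed
qed

lemma Fn_lip:
  assumes Kn: "\<And>n. K n \<ge> 0" and n: "1 \<le> n" and Kp: "K n > 0" and C: "C \<ge> 0"
    and S: "(\<Sum>j<n. \<bar>\<omega> j\<bar>) \<le> C * real n"
  shows "\<bar>Fn K \<beta> h \<omega> n - Fn K \<beta>' h' \<omega> n\<bar> \<le> C * \<bar>\<beta> - \<beta>'\<bar> + \<bar>h - h'\<bar>"
proof -
  have Z1: "Zpart K \<beta> h \<omega> n > 0" and Z2: "Zpart K \<beta>' h' \<omega> n > 0"
    using Zpart_pos[where K=K and n=n, OF Kn n Kp] by auto
  define d where "d = \<bar>\<beta> - \<beta>'\<bar> * (C * real n) + \<bar>h - h'\<bar> * real n"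
  have "Zpart K \<beta> h \<omega> n \<le> exp d * Zpart K \<beta>' h' \<omega> n"
    unfolding d_def by (rule Zpart_lip[OF Kn S])
  then have "ln (Zpart K \<beta> h \<omega> n) \<le> ln (exp d * Zpart K \<beta>' h' \<omega> n)"
    using Z1 Z2 by (subst ln_le_cancel_iff) auto
  then have a: "ln (Zpart K \<beta> h \<omega> n) \<le> d + ln (Zpart K \<beta>' h' \<omega> n)"
    using Z2 by (simp add: ln_mult)
  have "Zpart K \<beta>' h' \<omega> n \<le> exp d * Zpart K \<beta> h \<omega> n"
    unfolding d_def using Zpart_lip[where \<beta>=\<beta>' and h=h' and \<beta>'=\<beta> and h'=h, OF Kn S] by (simp add: abs_minus_commute)
  then have "ln (Zpart K \<beta>' h' \<omega> n) \<le> ln (exp d * Zpart K \<beta> h \<omega> n)"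
    using Z1 Z2 by (subst ln_le_cancel_iff) auto
  then have b: "ln (Zpart K \<beta>' h' \<omega> n) \<le> d + ln (Zpart K \<beta> h \<omega> n)"
    using Z1 by (simp add: ln_mult)
  have "\<bar>ln (Zpart K \<beta> h \<omega> n) - ln (Zpart K \<beta>' h' \<omega> n)\<bar> \<le> d" using a b by linarith
  also have "d = real n * (C * \<bar>\<beta> - \<beta>'\<bar> + \<bar>h - h'\<bar>)" unfolding d_def by (simp add: algebra_simps)
  finally have "\<bar>ln (Zpart K \<beta> h \<omega> n) - ln (Zpart K \<beta>' h' \<omega> n)\<bar> / real n \<le> C * \<bar>\<beta> - \<beta>'\<bar> + \<bar>h - h'\<bar>"
    using n by (simp add: divide_le_eq mult.commute)
  then show ?thesis unfolding Fn_def using n by (simp add: diff_divide_distrib[symmetric])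
qed

lemma transfer_conv:
  assumes Kn: "\<And>n. K n \<ge> 0" and Kpos: "eventually (\<lambda>n. K n > 0) sequentially" and C: "C \<ge> 0"
    and S1: "eventually (\<lambda>n. (\<Sum>j<n. \<bar>\<omega> j\<bar>) \<le> C * real n) sequentially"
    and S2: "eventually (\<lambda>n. (\<Sum>j<n. \<bar>\<omega>' j\<bar>) \<le> C * real n) sequentially"
    and dense: "\<And>q r. q \<in> \<rat> \<Longrightarrow> 0 \<le> q \<Longrightarrow> r \<in> \<rat> \<Longrightarrow>
        \<exists>d. (\<lambda>n. Fn K q r \<omega> n) \<longlonglongrightarrow> d \<and> (\<lambda>n. Fn K q r \<omega>' n) \<longlonglongrightarrow> d"
    and b: "\<beta> \<ge> 0" and conv': "(\<lambda>n. Fn K \<beta> h \<omega>' n) \<longlonglongrightarrow> c"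
  shows "(\<lambda>n. Fn K \<beta> h \<omega> n) \<longlonglongrightarrow> c"
proof (rule tendstoI)
  fix e :: real assume e: "e > 0"
  define \<delta> where "\<delta> = e / (5 * (C + 1))"
  have \<delta>: "\<delta> > 0" unfolding \<delta>_def using e C by auto
  obtain q where q: "q \<in> \<rat>" "\<beta> < q" "q < \<beta> + \<delta>" using Rats_dense_in_real[of \<beta> "\<beta> + \<delta>"] \<delta> by auto
  obtain r where r: "r \<in> \<rat>" "h < r" "r < h + \<delta>" using Rats_dense_in_real[of h "h + \<delta>"] \<delta> by auto
  obtain d where d1: "(\<lambda>n. Fn K q r \<omega> n) \<longlonglongrightarrow> d" and d2: "(\<lambda>n. Fn K q r \<omega>' n) \<longlonglongrightarrow> d"
    using dense[OF q(1) _ r(1)] q b by force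
  have "C * \<bar>\<beta> - q\<bar> \<le> C * \<delta>" using q C by (intro mult_left_mono) auto
  moreover have "\<bar>h - r\<bar> < \<delta>" using r by auto
  moreover have "C * \<delta> + \<delta> = e / 5"
  proof -
    have "C * \<delta> + \<delta> = (C + 1) * \<delta>" by (simp add: algebra_simps)
    also have "\<dots> = e / 5" unfolding \<delta>_def using C by (simp add: divide_simps)
    finally show ?thesis .
  qed
  ultimately have lip: "C * \<bar>\<beta> - q\<bar> + \<bar>h - r\<bar> < e / 5" by linarith
  have e5: "e / 5 > 0" using e by simp
  have ev: "eventually (\<lambda>n. (K n > 0 \<and> 1 \<le> n) \<and> ((\<Sum>j<n. \<bar>\<omega> j\<bar>) \<le> C * real n \<and> (\<Sum>j<n. \<bar>\<omega>' j\<bar>) \<le> C * real n)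
      \<and> (dist (Fn K q r \<omega> n) d < e / 5 \<and> dist (Fn K q r \<omega>' n) d < e / 5 \<and> dist (Fn K \<beta> h \<omega>' n) c < e / 5)) sequentially"
    by (intro eventually_conj Kpos eventually_ge_at_top S1 S2 tendstoD[OF d1 e5] tendstoD[OF d2 e5] tendstoD[OF conv' e5])
  show "eventually (\<lambda>n. dist (Fn K \<beta> h \<omega> n) c < e) sequentially"
  proof (rule eventually_mono[OF ev])
    fix n assume H: "(K n > 0 \<and> 1 \<le> n) \<and> ((\<Sum>j<n. \<bar>\<omega> j\<bar>) \<le> C * real n \<and> (\<Sum>j<n. \<bar>\<omega>' j\<bar>) \<le> C * real n)
      \<and> (dist (Fn K q r \<omega> n) d < e / 5 \<and> dist (Fn K q r \<omega>' n) d < e / 5 \<and> dist (Fn K \<beta> h \<omega>' n) c < e / 5)"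
    have l1: "\<bar>Fn K \<beta> h \<omega> n - Fn K q r \<omega> n\<bar> \<le> C * \<bar>\<beta> - q\<bar> + \<bar>h - r\<bar>"
      using H by (intro Fn_lip[OF Kn _ _ C]) auto
    have l2: "\<bar>Fn K \<beta> h \<omega>' n - Fn K q r \<omega>' n\<bar> \<le> C * \<bar>\<beta> - q\<bar> + \<bar>h - r\<bar>"
      using H by (intro Fn_lip[OF Kn _ _ C]) auto
    show "dist (Fn K \<beta> h \<omega> n) c < e"
      using H l1 l2 lip unfolding dist_real_def by linarith
  qed
qed

lemma lnenn_lt:
  assumes N: "1 \<le> N" and H: "ereal (1 / real N) * ln_enn E < ereal h"
  shows "E < ennreal (exp (h * real N))"
proof (cases E rule: ennreal_cases)
  case (real r)
  show ?thesis
  proof (cases "r = 0")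
    case True then show ?thesis using real by simp
  next
    case False
    then have r: "r > 0" using real by auto
    have "ln_enn E = ereal (ln r)" unfolding ln_enn_def using real r by simp
    then have "ln r / real N < h" using H by simp
    then have "ln r < h * real N" using N by (simp add: divide_less_eq)
    then have "r < exp (h * real N)" using r by (metis exp_less_cancel_iff exp_ln)
    then show ?thesis using real r by (simp add: ennreal_lessI)
  qed
next
  case top
  then have "ln_enn E = \<infinity>" unfolding ln_enn_def by simp
  then show ?thesis using H N by simp
qed

lemma lnenn_gt:
  assumes N: "1 \<le> N" and H: "ereal h < ereal (1 / real N) * ln_enn E"
  shows "ennreal (exp (h * real N)) < E"
proof (cases E rule: ennreal_cases)
  case (real r)
  show ?thesis
  proof (cases "r = 0")
    case True
    then have "ln_enn E = - \<infinity>" unfolding ln_enn_def using real by simp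
    then show ?thesis using H N by simp
  next
    case False
    then have r: "r > 0" using real by auto
    have "ln_enn E = ereal (ln r)" unfolding ln_enn_def using real r by simp
    then have "h < ln r / real N" using H by simp
    then have "h * real N < ln r" using N by (simp add: less_divide_eq)
    then have "exp (h * real N) < r" using r by (metis exp_less_cancel_iff exp_ln)
    then show ?thesis using real r by (simp add: ennreal_lessI)
  qed
next
  case top
  then show ?thesis by simp
qed

lemma ln_enn_mono: "x \<le> y \<Longrightarrow> ln_enn x \<le> ln_enn y"
  unfolding ln_enn_def
  by (cases x rule: ennreal_cases; cases y rule: ennreal_cases) (auto simp: enn2real_nonneg top_unique)

lemma renewal_E_mono:
  assumes Kn: "\<And>n. K n \<ge> 0" and z: "0 \<le> z" "z \<le> z'"
  shows "renewal_E K z \<beta> \<omega> N \<le> renewal_E K z' \<beta> \<omega> N"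
  unfolding renewal_E_def
proof (intro nn_integral_mono ennreal_leI)
  fix t :: "nat \<Rightarrow> nat"
  have "z ^ (\<Sum>i<N. t i) \<le> z' ^ (\<Sum>i<N. t i)" using z by (intro power_mono) auto
  then show "(\<Prod>i<N. K (t i)) * z ^ (\<Sum>i<N. t i) * exp (\<beta> * (\<Sum>i<N. \<omega> (\<Sum>j<i. t j)))
    \<le> (\<Prod>i<N. K (t i)) * z' ^ (\<Sum>i<N. t i) * exp (\<beta> * (\<Sum>i<N. \<omega> (\<Sum>j<i. t j)))"
    using Kn by (intro mult_right_mono mult_left_mono prod_nonneg) auto
qed

lemma S_que_mono:
  assumes Kn: "\<And>n. K n \<ge> 0" and z: "0 \<le> z" "z \<le> z'"
  shows "S_que K \<beta> z \<omega> \<le> S_que K \<beta> z' \<omega>"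
  unfolding S_que_def
proof (intro Limsup_mono always_eventually allI)
  fix N :: nat
  show "ereal (1 / real N) * ln_enn (renewal_E K z \<beta> \<omega> N) \<le> ereal (1 / real N) * ln_enn (renewal_E K z' \<beta> \<omega> N)"
    by (intro ereal_mult_left_mono ln_enn_mono renewal_E_mono[OF Kn z]) auto
qed

lemma S_que_left_SUP:
  assumes Kn: "\<And>n. K n \<ge> 0"
  shows "S_que_left K \<beta> \<omega> = (SUP z\<in>{0<..<1}. S_que K \<beta> z \<omega>)"
proof -
  define L where "L = (SUP z\<in>{0<..<1::real}. S_que K \<beta> z \<omega>)"
  have "((\<lambda>z. S_que K \<beta> z \<omega>) \<longlongrightarrow> L) (at_left 1)"
  proof (rule order_tendstoI)
    fix a assume "a < L"
    then obtain y where y: "y \<in> {0<..<1}" "a < S_que K \<beta> y \<omega>" unfolding L_def by (auto simp: less_SUP_iff)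
    show "eventually (\<lambda>z. a < S_que K \<beta> z \<omega>) (at_left 1)"
      unfolding eventually_at_left[OF \<open>y \<in> {0<..<1}\<close>[THEN greaterThanLessThan_iff[THEN iffD1], THEN conjunct2]]
    proof (intro exI[of _ y] conjI allI impI)
      show "y < 1" using y by simp
      fix z assume "y < z" "z < 1"
      then have "S_que K \<beta> y \<omega> \<le> S_que K \<beta> z \<omega>" using y by (intro S_que_mono[OF Kn]) auto
      then show "a < S_que K \<beta> z \<omega>" using y by simp
    qed
  next
    fix a assume "L < a"
    show "eventually (\<lambda>z. S_que K \<beta> z \<omega> < a) (at_left 1)"
      unfolding eventually_at_left[of 0 "1::real", simplified]
    proof (intro exI[of _ 0] conjI allI impI)
      fix z :: real assume "0 < z" "z < 1"
      then have "S_que K \<beta> z \<omega> \<le> L" unfolding L_def by (intro SUP_upper) auto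
      then show "S_que K \<beta> z \<omega> < a" using \<open>L < a\<close> by simp
    qed simp
  qed
  then show ?thesis unfolding S_que_left_def L_def by (intro tendsto_Lim) auto
qed

lemma less_LimsupD':
  fixes X :: "_ \<Rightarrow> _ :: complete_linorder"
  assumes "y < Limsup F X"
  shows "frequently (\<lambda>x. y < X x) F"
proof -
  have "\<not> Limsup F X \<le> y" using assms by simp
  then obtain y' where y': "y' > y" "\<not> eventually (\<lambda>x. y' > X x) F"
    unfolding Limsup_le_iff by auto
  then have "\<not> eventually (\<lambda>x. \<not> y' \<le> X x) F" by (simp add: not_le)
  then have "frequently (\<lambda>x. y' \<le> X x) F" by (simp add: frequently_def)
  then show ?thesis by (rule frequently_elim1) (use y' in auto)
qed

lemma enn_term_le_suminf: "(f m :: ennreal) \<le> suminf f"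
  by (rule ccontr) (use ennreal_suminf_lessD[of f "f m" m] in \<open>auto simp: not_le\<close>)

lemma dir2:
  assumes Kn: "\<And>n. K n \<ge> 0" and K0: "K 0 = 0" and z: "0 < z" "z < 1"
    and Sgt: "ereal h < S_que K \<beta> z \<omega>"
    and conv: "(\<lambda>n. Fn K \<beta> h \<omega> n) \<longlonglongrightarrow> c"
  shows "c \<ge> - ln z"
proof (rule ccontr)
  assume "\<not> c \<ge> - ln z"
  then have cl: "c < - ln z" by simp
  define d where "d = (c - ln z) / 2"
  have cd: "c < d" and dl: "d < - ln z" unfolding d_def using cl by auto
  define q where "q = z * exp d"
  have q0: "0 < q" unfolding q_def using z by simp
  have "exp d < exp (- ln z)" using dl by simp
  then have "exp d < 1 / z" using z by (simp add: exp_minus inverse_eq_divide)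
  then have q1: "q < 1" unfolding q_def using z by (simp add: field_simps)
  have "eventually (\<lambda>n. Fn K \<beta> h \<omega> n < d) sequentially"
    using order_tendstoD(2)[OF conv cd] .
  then obtain n0 where n0: "\<And>n. n \<ge> n0 \<Longrightarrow> Fn K \<beta> h \<omega> n < d" unfolding eventually_sequentially by auto
  define n1 where "n1 = max n0 1"
  have Zb: "Zpart K \<beta> h \<omega> n \<le> exp (d * real n)" if "n \<ge> n1" for n
  proof -
    have n: "n \<ge> 1" "n \<ge> n0" using that unfolding n1_def by auto
    have "ln (Zpart K \<beta> h \<omega> n) / real n < d" using n0[OF n(2)] unfolding Fn_def .
    then have l: "ln (Zpart K \<beta> h \<omega> n) < d * real n" using n by (simp add: divide_less_eq)
    show ?thesis
    proof (cases "Zpart K \<beta> h \<omega> n = 0")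
      case True then show ?thesis by simp
    next
      case False
      then have "Zpart K \<beta> h \<omega> n > 0" using Zpart_nonneg[where K=K and \<beta>=\<beta> and h=h and \<omega>=\<omega> and n=n, OF Kn] by simp
      then have "Zpart K \<beta> h \<omega> n = exp (ln (Zpart K \<beta> h \<omega> n))" by simp
      also have "\<dots> \<le> exp (d * real n)" using l by simp
      finally show ?thesis .
    qed
  qed
  have Ebound: "renewal_E K z \<beta> \<omega> N \<le> ennreal (exp (h * N) * (q ^ N / (1 - q)))" if N: "N \<ge> n1" for N
  proof -
    define g where "g m = (if N \<le> m then exp (h * N) * q ^ m else 0)" for m
    have gs: "g sums (exp (h * N) * (q ^ N / (1 - q)))"
    proof -
      have "(\<lambda>i. exp (h * N) * q ^ N * q ^ i) sums (exp (h * N) * q ^ N * (1 / (1 - q)))"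
        using q0 q1 by (intro sums_mult geometric_sums) auto
      moreover have "(\<lambda>i. g (i + N)) = (\<lambda>i. exp (h * N) * q ^ N * q ^ i)"
        unfolding g_def by (auto simp: power_add mult_ac)
      ultimately have "(\<lambda>i. g (i + N)) sums (exp (h * N) * (q ^ N / (1 - q)))" by simp
      moreover have "(\<Sum>i<N. g i) = 0" unfolding g_def by simp
      ultimately show ?thesis by (simp add: sums_iff_shift)
    qed
    have g0: "g m \<ge> 0" for m unfolding g_def using q0 by auto
    have "renewal_E K z \<beta> \<omega> N = (\<Sum>m. ennreal (z ^ m * W K \<beta> \<omega> N m))"
      using z by (intro renewal_E_eq[where K=K, OF K0 Kn]) auto
    also have "\<dots> \<le> (\<Sum>m. ennreal (g m))"
    proof (intro suminf_le ennreal_leI summableI)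
      fix m
      show "z ^ m * W K \<beta> \<omega> N m \<le> g m"
      proof (cases "N \<le> m")
        case False then show ?thesis unfolding g_def using W_empty[of m N] by simp
      next
        case True
        have N1: "1 \<le> N" using N unfolding n1_def by auto
        have m1: "m \<ge> n1" using N True by simp
        have "exp (- h * N) * W K \<beta> \<omega> N m \<le> Zpart K \<beta> h \<omega> m"
          by (rule W_le_Zpart[OF Kn N1 True])
        also have "\<dots> \<le> exp (d * real m)" by (rule Zb[OF m1])
        finally have "exp (- h * N) * W K \<beta> \<omega> N m \<le> exp (d * real m)" .
        then have "W K \<beta> \<omega> N m \<le> exp (h * N) * exp (d * real m)"
          by (simp add: exp_minus field_simps)
        then have "z ^ m * W K \<beta> \<omega> N m \<le> z ^ m * (exp (h * N) * exp (d * real m))"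
          using z by (intro mult_left_mono) auto
        also have "\<dots> = exp (h * N) * q ^ m"
          unfolding q_def by (simp add: power_mult_distrib exp_of_nat_mult[symmetric] mult_ac)
        finally show ?thesis unfolding g_def using True by simp
      qed
    qed
    also have "\<dots> = ennreal (\<Sum>m. g m)" using g0 gs by (intro suminf_ennreal2) (auto simp: sums_iff)
    also have "\<dots> = ennreal (exp (h * N) * (q ^ N / (1 - q)))" using gs by (simp add: sums_iff)
    finally show ?thesis .
  qed
  have "frequently (\<lambda>N. ereal h < ereal (1 / real N) * ln_enn (renewal_E K z \<beta> \<omega> N)) sequentially"
    using Sgt unfolding S_que_def by (rule less_LimsupD')
  moreover have "eventually (\<lambda>N. N \<ge> n1 \<and> q ^ N / (1 - q) < 1) sequentially"
  proof (intro eventually_conj eventually_ge_at_top)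
    have "(\<lambda>N. q ^ N / (1 - q)) \<longlonglongrightarrow> 0 / (1 - q)"
      using q0 q1 by (intro tendsto_divide LIMSEQ_power_zero tendsto_const) auto
    then show "eventually (\<lambda>N. q ^ N / (1 - q) < 1) sequentially"
      by (rule order_tendstoD(2)) simp
  qed
  ultimately have "frequently (\<lambda>N. ereal h < ereal (1 / real N) * ln_enn (renewal_E K z \<beta> \<omega> N) \<and> N \<ge> n1 \<and> q ^ N / (1 - q) < 1) sequentially"
  proof -
    assume fr: "frequently (\<lambda>N. ereal h < ereal (1 / real N) * ln_enn (renewal_E K z \<beta> \<omega> N)) sequentially"
      and ev: "eventually (\<lambda>N. N \<ge> n1 \<and> q ^ N / (1 - q) < 1) sequentially"
    have "eventually (\<lambda>N. ereal h < ereal (1 / real N) * ln_enn (renewal_E K z \<beta> \<omega> N) \<longrightarrow>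
       ereal h < ereal (1 / real N) * ln_enn (renewal_E K z \<beta> \<omega> N) \<and> N \<ge> n1 \<and> q ^ N / (1 - q) < 1) sequentially"
      using ev by (rule eventually_mono) auto
    from frequently_mp[OF this fr] show ?thesis .
  qed
  then obtain N where H: "ereal h < ereal (1 / real N) * ln_enn (renewal_E K z \<beta> \<omega> N)" "N \<ge> n1" "q ^ N / (1 - q) < 1"
    by (auto dest: frequently_ex)
  have N1: "1 \<le> N" using H(2) unfolding n1_def by auto
  have "ennreal (exp (h * real N)) < renewal_E K z \<beta> \<omega> N" by (rule lnenn_gt[OF N1 H(1)])
  also have "\<dots> \<le> ennreal (exp (h * N) * (q ^ N / (1 - q)))" by (rule Ebound[OF H(2)])
  finally have "exp (h * real N) < exp (h * N) * (q ^ N / (1 - q))"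
    by (subst (asm) ennreal_less_iff) auto
  moreover have "exp (h * N) * (q ^ N / (1 - q)) \<le> exp (h * N) * 1"
    using H(3) by (intro mult_left_mono) auto
  ultimately show False by simp
qed

lemma dir1:
  assumes Kn: "\<And>n. K n \<ge> 0" and K0: "K 0 = 0" and K1: "\<And>n. K n \<le> 1" and b: "\<beta> \<ge> 0"
    and A: "A \<ge> 0" and om: "\<And>j. \<bar>\<omega> j\<bar> \<le> A + 2 * ln (real j + 1)"
    and z: "0 < z" "z < 1"
    and Slt: "S_que K \<beta> z \<omega> < ereal h"
    and Kpos: "eventually (\<lambda>n. K n > 0) sequentially"
    and conv: "(\<lambda>n. Fn K \<beta> h \<omega> n) \<longlonglongrightarrow> c"
  shows "c \<le> - ln z"
proof -
  have "eventually (\<lambda>N. ereal (1 / real N) * ln_enn (renewal_E K z \<beta> \<omega> N) < ereal h) sequentially"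
    using Slt unfolding S_que_def by (rule Limsup_lessD)
  then obtain N0' where N0': "\<And>N. N \<ge> N0' \<Longrightarrow> ereal (1 / real N) * ln_enn (renewal_E K z \<beta> \<omega> N) < ereal h"
    unfolding eventually_sequentially by auto
  define N0 where "N0 = max N0' 1"
  have big: "z ^ m * exp (- h * N) * W K \<beta> \<omega> N m \<le> 1" if N: "N \<ge> N0" for N m
  proof -
    have N1: "1 \<le> N" using N unfolding N0_def by auto
    have lt: "renewal_E K z \<beta> \<omega> N < ennreal (exp (h * real N))"
      by (rule lnenn_lt[OF N1 N0']) (use N in \<open>auto simp: N0_def\<close>)
    have "ennreal (z ^ m * W K \<beta> \<omega> N m) \<le> (\<Sum>m. ennreal (z ^ m * W K \<beta> \<omega> N m))"
      by (rule enn_term_le_suminf)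
    also have "\<dots> = renewal_E K z \<beta> \<omega> N"
      using z by (intro renewal_E_eq[where K=K, OF K0 Kn, symmetric]) auto
    finally have "ennreal (z ^ m * W K \<beta> \<omega> N m) < ennreal (exp (h * real N))" using lt by simp
    then have "z ^ m * W K \<beta> \<omega> N m < exp (h * real N)"
      using z W_nonneg[OF Kn] by (subst (asm) ennreal_less_iff) auto
    then have "z ^ m * W K \<beta> \<omega> N m * exp (- h * N) \<le> exp (h * real N) * exp (- h * N)"
      by (intro mult_right_mono) auto
    also have "\<dots> = 1" by (simp add: exp_add[symmetric])
    finally show ?thesis by (simp add: mult_ac)
  qed
  define a0 where "a0 = \<bar>h\<bar> * N0 + \<beta> * N0 * A"
  define b0 where "b0 = 2 * \<beta> * N0 + N0"
  define Q where "Q n = a0 + b0 * ln (real n + 1)" for n :: nat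
  have Q0: "Q n \<ge> 0" for n unfolding Q_def a0_def b0_def using b A by auto
  have small: "z ^ n * exp (- h * N) * W K \<beta> \<omega> N n \<le> exp (Q n)" if N: "N < N0" for N n
  proof -
    have ln0: "ln (real n + 1) \<ge> 0" by simp
    have "W K \<beta> \<omega> N n \<le> (real n + 1) ^ (N + 1) * exp (\<beta> * N * (A + 2 * ln (real n + 1)))"
      by (rule W_small[OF Kn K1 b A om])
    also have "(real n + 1) ^ (N + 1) = exp (real (N + 1) * ln (real n + 1))"
      unfolding exp_of_nat_mult by simp
    also have "\<dots> \<le> exp (real N0 * ln (real n + 1))"
      using N ln0 by (intro exp_le_cancel_iff[THEN iffD2] mult_right_mono) auto
    also have "exp (\<beta> * N * (A + 2 * ln (real n + 1))) \<le> exp (\<beta> * N0 * (A + 2 * ln (real n + 1)))"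
      using N ln0 A b by (intro exp_le_cancel_iff[THEN iffD2] mult_right_mono mult_left_mono) auto
    finally have W1: "W K \<beta> \<omega> N n \<le> exp (real N0 * ln (real n + 1)) * exp (\<beta> * N0 * (A + 2 * ln (real n + 1)))"
      by (simp add: mult_left_mono)
    have e1: "exp (- h * N) \<le> exp (\<bar>h\<bar> * N0)"
    proof -
      have "- h * N \<le> \<bar>h\<bar> * N" by (intro mult_right_mono) auto
      also have "\<dots> \<le> \<bar>h\<bar> * N0" using N by (intro mult_left_mono) auto
      finally show ?thesis by simp
    qed
    have zn: "z ^ n \<le> 1" using z by (intro power_le_one) auto
    have "z ^ n * exp (- h * N) * W K \<beta> \<omega> N n \<le> 1 * exp (\<bar>h\<bar> * N0) *
        (exp (real N0 * ln (real n + 1)) * exp (\<beta> * N0 * (A + 2 * ln (real n + 1))))"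
      using zn e1 W1 z W_nonneg[OF Kn] by (intro mult_mono) auto
    also have "\<dots> = exp (Q n)"
      unfolding Q_def a0_def b0_def by (simp add: exp_add[symmetric] algebra_simps)
    finally show ?thesis .
  qed
  have bnd: "z ^ n * Zpart K \<beta> h \<omega> n \<le> real n * (exp (Q n) + 1)" for n
  proof -
    have "z ^ n * Zpart K \<beta> h \<omega> n = (\<Sum>N\<in>{1..n}. z ^ n * exp (- h * N) * W K \<beta> \<omega> N n)"
      unfolding Zpart_W by (simp add: sum_distrib_left mult_ac)
    also have "\<dots> \<le> (\<Sum>N\<in>{1..n}. exp (Q n) + 1)"
    proof (intro sum_mono)
      fix N
      show "z ^ n * exp (- h * N) * W K \<beta> \<omega> N n \<le> exp (Q n) + 1"
      proof (cases "N < N0")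
        case True then show ?thesis using small[OF True, of n] by simp
      next
        case False
        then have "z ^ n * exp (- h * N) * W K \<beta> \<omega> N n \<le> 1" using big[of N n] by simp
        then show ?thesis using exp_gt_zero[of "Q n"] by linarith
      qed
    qed
    also have "\<dots> = real n * (exp (Q n) + 1)" by simp
    finally show ?thesis .
  qed
  define u where "u n = (ln 2 + a0) / real n + (1 + b0) * (ln (real n + 1) / real n) - ln z" for n :: nat
  have ub: "eventually (\<lambda>n. Fn K \<beta> h \<omega> n \<le> u n) sequentially"
  proof (rule eventually_mono[OF eventually_conj[OF Kpos eventually_ge_at_top[of 1]]])
    fix n :: nat assume "0 < K n \<and> 1 \<le> n"
    then have Kp: "0 < K n" and n: "1 \<le> n" by auto
    have Zp: "Zpart K \<beta> h \<omega> n > 0" by (rule Zpart_pos[where K=K and n=n, OF Kn n Kp])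
    have pos: "z ^ n * Zpart K \<beta> h \<omega> n > 0" using Zp z by simp
    have "ln (z ^ n * Zpart K \<beta> h \<omega> n) \<le> ln (real n * (exp (Q n) + 1))"
      using pos bnd[of n] by (subst ln_le_cancel_iff) auto
    also have "\<dots> \<le> ln ((real n + 1) * (2 * exp (Q n)))"
    proof (subst ln_le_cancel_iff)
      have "0 < exp (Q n) + 1" using exp_gt_zero[of "Q n"] by linarith
      then show "0 < real n * (exp (Q n) + 1)" using n by (intro mult_pos_pos) auto
      show "0 < (real n + 1) * (2 * exp (Q n))" by simp
      have "1 \<le> exp (Q n)" using Q0[of n] by simp
      then show "real n * (exp (Q n) + 1) \<le> (real n + 1) * (2 * exp (Q n))"
        by (intro mult_mono) auto
    qed
    also have "\<dots> = ln (real n + 1) + ln 2 + Q n" by (simp add: ln_mult)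
    finally have l1: "ln (z ^ n * Zpart K \<beta> h \<omega> n) \<le> ln (real n + 1) + ln 2 + Q n" .
    have "ln (z ^ n * Zpart K \<beta> h \<omega> n) = real n * ln z + ln (Zpart K \<beta> h \<omega> n)"
      using z Zp by (simp add: ln_mult ln_realpow)
    with l1 have "ln (Zpart K \<beta> h \<omega> n) \<le> ln (real n + 1) + ln 2 + Q n - real n * ln z" by simp
    then have "ln (Zpart K \<beta> h \<omega> n) / real n \<le> (ln (real n + 1) + ln 2 + Q n - real n * ln z) / real n"
      by (intro divide_right_mono) auto
    also have "\<dots> = u n"
      unfolding u_def Q_def using n by (simp add: field_simps)
    finally show "Fn K \<beta> h \<omega> n \<le> u n" unfolding Fn_def .
  qed
  have "(\<lambda>n. ln (real n + 1) / real n) \<longlonglongrightarrow> 0" by real_asymp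
  then have "u \<longlonglongrightarrow> 0 + (1 + b0) * 0 - ln z"
    unfolding u_def by (intro tendsto_intros lim_const_over_n)
  then have "u \<longlonglongrightarrow> - ln z" by simp
  then show ?thesis by (rule tendsto_le[OF sequentially_bot _ conv ub])
qed



theorem lemma3p1:
  fixes K :: "nat \<Rightarrow> real" and \<alpha> :: real and \<mu>0 :: "real measure"
  assumes K_nonneg: "\<And>n. K n \<ge> 0"
    and K_zero: "K 0 = 0"
    and K_sum: "K sums 1"
    and K_pos_ev: "eventually (\<lambda>n. K n > 0) sequentially"
    and K_tail: "(\<lambda>n. ln (K n) / ln (real n)) \<longlonglongrightarrow> - (1 + \<alpha>)"
    and alpha_nonneg: "\<alpha> \<ge> 0"
    and mu_prob: "prob_space \<mu>0"
    and mu_sets: "sets \<mu>0 = sets borel"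
    and mu_mgf: "\<And>l. integrable \<mu>0 (\<lambda>x. exp (l * x))"
    and mu_mean: "(\<integral>x. x \<partial>\<mu>0) = 0"
    and mu_var: "(\<integral>x. x ^ 2 \<partial>\<mu>0) = 1"
    and f_exists: "\<And>\<beta> h. \<beta> \<ge> 0 \<Longrightarrow> \<exists>c. AE \<omega> in (\<Pi>\<^sub>M i\<in>(UNIV::nat set). \<mu>0).
                     (\<lambda>n. ln (Zpart K \<beta> h \<omega> n) / real n) \<longlonglongrightarrow> c"
  shows "AE \<omega> in (\<Pi>\<^sub>M i\<in>(UNIV::nat set). \<mu>0).
           \<forall>\<beta>\<ge>0. \<forall>h::real.
             (S_que_left K \<beta> \<omega> < ereal h \<longrightarrow> f_que \<mu>0 K \<beta> h = 0) \<and>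
             (S_que_left K \<beta> \<omega> > ereal h \<longrightarrow> f_que \<mu>0 K \<beta> h > 0)"
proof -
  interpret M0: prob_space \<mu>0 by (rule mu_prob)
  interpret PP: product_prob_space "\<lambda>_::nat. \<mu>0" UNIV by unfold_locales
  have K1: "\<And>n. K n \<le> 1" by (rule K_le1[OF K_nonneg K_sum])
  have lnK: "(\<lambda>n. ln (K n) / real n) \<longlonglongrightarrow> 0" by (rule lnK_over_n[OF K_tail])
  have AE_ex: "\<exists>\<omega>. Q \<omega>" if "AE \<omega> in (\<Pi>\<^sub>M i\<in>(UNIV::nat set). \<mu>0). Q \<omega>" for Q
  proof -
    have "AE \<omega> in (\<Pi>\<^sub>M i\<in>(UNIV::nat set). \<mu>0). \<exists>\<omega>. Q \<omega>"
      using that by (rule eventually_mono) auto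
    then show ?thesis by simp
  qed
  obtain C where C: "C > 0" and Cae: "AE \<omega> in (\<Pi>\<^sub>M i\<in>(UNIV::nat set). \<mu>0).
      eventually (\<lambda>n. (\<Sum>k<n. \<bar>\<omega> k\<bar>) \<le> C * real n) sequentially"
    using sum_abs_linear[OF mu_prob mu_sets mu_mgf] by blast
  have Aae: "AE \<omega> in (\<Pi>\<^sub>M i\<in>(UNIV::nat set). \<mu>0). \<exists>A\<ge>0. \<forall>j. \<bar>\<omega> j\<bar> \<le> A + 2 * ln (real j + 1)"
    by (rule max_log_bound[OF mu_prob mu_sets mu_mgf])
  have fq: "AE \<omega> in (\<Pi>\<^sub>M i\<in>(UNIV::nat set). \<mu>0). (\<lambda>n. Fn K \<beta> h \<omega> n) \<longlonglongrightarrow> f_que \<mu>0 K \<beta> h"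
    if b: "\<beta> \<ge> 0" for \<beta> h
  proof -
    obtain c where c: "AE \<omega> in (\<Pi>\<^sub>M i\<in>(UNIV::nat set). \<mu>0). (\<lambda>n. ln (Zpart K \<beta> h \<omega> n) / real n) \<longlonglongrightarrow> c"
      using f_exists[OF b] by blast
    have "f_que \<mu>0 K \<beta> h = c"
      unfolding f_que_def
    proof (rule the_equality)
      show "AE \<omega> in (\<Pi>\<^sub>M i\<in>(UNIV::nat set). \<mu>0). (\<lambda>n. ln (Zpart K \<beta> h \<omega> n) / real n) \<longlonglongrightarrow> c" by (rule c)
      fix c' assume c': "AE \<omega> in (\<Pi>\<^sub>M i\<in>(UNIV::nat set). \<mu>0). (\<lambda>n. ln (Zpart K \<beta> h \<omega> n) / real n) \<longlonglongrightarrow> c'"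
      have "AE \<omega> in (\<Pi>\<^sub>M i\<in>(UNIV::nat set). \<mu>0). (\<lambda>n. ln (Zpart K \<beta> h \<omega> n) / real n) \<longlonglongrightarrow> c \<and>
          (\<lambda>n. ln (Zpart K \<beta> h \<omega> n) / real n) \<longlonglongrightarrow> c'"
        using c c' by (rule eventually_conj)
      then obtain \<omega> where "(\<lambda>n. ln (Zpart K \<beta> h \<omega> n) / real n) \<longlonglongrightarrow> c"
          "(\<lambda>n. ln (Zpart K \<beta> h \<omega> n) / real n) \<longlonglongrightarrow> c'"
        using AE_ex by blast
      then show "c' = c" using LIMSEQ_unique by blast
    qed
    then show ?thesis using c unfolding Fn_def by simp
  qed
  define Q2 where "Q2 = {x :: real \<times> real. fst x \<in> \<rat> \<and> 0 \<le> fst x \<and> snd x \<in> \<rat>}"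
  have cQ2: "countable Q2"
  proof (rule countable_subset)
    show "Q2 \<subseteq> \<rat> \<times> \<rat>" unfolding Q2_def by auto
    show "countable (\<rat> \<times> (\<rat>::real set))" by (intro countable_SIGMA countable_rat)
  qed
  have Qae: "AE \<omega> in (\<Pi>\<^sub>M i\<in>(UNIV::nat set). \<mu>0). \<forall>x\<in>Q2.
      (\<lambda>n. Fn K (fst x) (snd x) \<omega> n) \<longlonglongrightarrow> f_que \<mu>0 K (fst x) (snd x)"
    using cQ2 by (subst AE_ball_countable) (auto intro!: fq simp: Q2_def)
  define G where "G \<omega> = ((\<forall>x\<in>Q2. (\<lambda>n. Fn K (fst x) (snd x) \<omega> n) \<longlonglongrightarrow> f_que \<mu>0 K (fst x) (snd x)) \<and>
      eventually (\<lambda>n. (\<Sum>k<n. \<bar>\<omega> k\<bar>) \<le> C * real n) sequentially \<and>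
      (\<exists>A\<ge>0. \<forall>j. \<bar>\<omega> j\<bar> \<le> A + 2 * ln (real j + 1)))" for \<omega> :: "nat \<Rightarrow> real"
  have Gae: "AE \<omega> in (\<Pi>\<^sub>M i\<in>(UNIV::nat set). \<mu>0). G \<omega>"
    unfolding G_def using Qae Cae Aae by (intro eventually_conj)
  have good: "\<exists>\<omega>'. G \<omega>' \<and> (\<lambda>n. Fn K \<beta> h \<omega>' n) \<longlonglongrightarrow> f_que \<mu>0 K \<beta> h" if "\<beta> \<ge> 0" for \<beta> h
    using AE_ex[OF eventually_conj[OF Gae fq[OF that]]] by blast
  show ?thesis
  proof (rule eventually_mono[OF Gae], intro allI impI conjI)
    fix \<omega> :: "nat \<Rightarrow> real" and \<beta> h :: real assume G\<omega>: "G \<omega>" and b: "0 \<le> \<beta>"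
    obtain \<omega>' where G\<omega>': "G \<omega>'" and conv': "(\<lambda>n. Fn K \<beta> h \<omega>' n) \<longlonglongrightarrow> f_que \<mu>0 K \<beta> h"
      using good[OF b] by blast
    have conv: "(\<lambda>n. Fn K \<beta> h \<omega> n) \<longlonglongrightarrow> f_que \<mu>0 K \<beta> h"
    proof (rule transfer_conv[where C=C and \<omega>'=\<omega>', OF K_nonneg K_pos_ev _ _ _ _ b conv'])
      show "0 \<le> C" using C by simp
      show "eventually (\<lambda>n. (\<Sum>j<n. \<bar>\<omega> j\<bar>) \<le> C * real n) sequentially" using G\<omega> unfolding G_def by blast
      show "eventually (\<lambda>n. (\<Sum>j<n. \<bar>\<omega>' j\<bar>) \<le> C * real n) sequentially" using G\<omega>' unfolding G_def by blast
      fix q r :: real assume qr: "q \<in> \<rat>" "0 \<le> q" "r \<in> \<rat>"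
      then have "(q, r) \<in> Q2" unfolding Q2_def by simp
      then show "\<exists>d. (\<lambda>n. Fn K q r \<omega> n) \<longlonglongrightarrow> d \<and> (\<lambda>n. Fn K q r \<omega>' n) \<longlonglongrightarrow> d"
        using G\<omega> G\<omega>' unfolding G_def by fastforce
    qed
    have c0: "f_que \<mu>0 K \<beta> h \<ge> 0" by (rule c_nonneg[OF K_nonneg K_pos_ev lnK conv])
    obtain A where A: "A \<ge> 0" "\<And>j. \<bar>\<omega> j\<bar> \<le> A + 2 * ln (real j + 1)" using G\<omega> unfolding G_def by blast
    have SUPeq: "S_que_left K \<beta> \<omega> = (SUP z\<in>{0<..<1}. S_que K \<beta> z \<omega>)" by (rule S_que_left_SUP[OF K_nonneg])
    show "f_que \<mu>0 K \<beta> h = 0" if lt: "S_que_left K \<beta> \<omega> < ereal h"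
    proof -
      have "f_que \<mu>0 K \<beta> h \<le> 0 + e" if e: "e > 0" for e
      proof -
        define z where "z = exp (- e)"
        have z: "0 < z" "z < 1" unfolding z_def using e by auto
        have "S_que K \<beta> z \<omega> \<le> S_que_left K \<beta> \<omega>" unfolding SUPeq using z by (intro SUP_upper) auto
        then have "S_que K \<beta> z \<omega> < ereal h" using lt by simp
        then have "f_que \<mu>0 K \<beta> h \<le> - ln z"
          by (rule dir1[OF K_nonneg K_zero K1 b A z _ K_pos_ev conv])
        then show ?thesis unfolding z_def by simp
      qed
      then have "f_que \<mu>0 K \<beta> h \<le> 0" by (rule field_le_epsilon)
      then show "f_que \<mu>0 K \<beta> h = 0" using c0 by simp
    qed
    show "f_que \<mu>0 K \<beta> h > 0" if gt: "S_que_left K \<beta> \<omega> > ereal h"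
    proof -
      from gt obtain z where z: "z \<in> {0<..<1}" "ereal h < S_que K \<beta> z \<omega>"
        unfolding SUPeq by (auto simp: less_SUP_iff)
      have "f_que \<mu>0 K \<beta> h \<ge> - ln z"
        using z by (intro dir2[OF K_nonneg K_zero _ _ _ conv]) auto
      moreover have "- ln z > 0" using z by simp
      ultimately show "f_que \<mu>0 K \<beta> h > 0" by simp
    qed
  qed
qed


end
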